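(* Let $\Gamma=\langle V,(w_u)_{u\in V},\alpha,\beta\rangle$ be a star celebrity game with $\beta>1$ and $n=|V|$, let $S$ be a Nash equilibrium of $\Gamma$ and $G=G[S]$. If there is a vertex $v\in V$ with $|S_v|>6n/\beta$, then there exists $X\subseteq S_v$ with $|X|\ge 3n/\beta$ such that for every $x\in X$ the edge $\{v,x\}$ is a bridge of $G$.
   Context: A celebrity game $\Gamma=\langle V,(w_u)_{u\in V},\alpha,\beta\rangle$ consists of a set of players $V=\{1,\dots,n\}$, celebrity weights $w_u>0$, a link cost $\alpha>0$ and a critical distance $\beta$ with $1\le\beta\le n-1$. A strategy of player $u$ is a set $S_u\subseteq V\setminus\{u\}$; a strategy profile is $S=(S_1,\dots,S_n)$; its outcome graph $G[S]$ is the undirected graph on $V$ with edge set $\{\{u,v\}: u\in S_v\text{ or }v\in S_u\}$. With $d_G$ the graph distance (infinite between different connected components), the cost of player $u$ is $c_u(S)=\alpha|S_u|+\sum_{v:\,d_{G[S]}(u,v)>\beta}w_v$. $S$ is a Nash equilibrium if no player can strictly decrease its cost by changing only its own strategy. $\Gamma$ is a star celebrity game if $G[S]$ is connected for some Nash equilibrium $S$. A bridge is an edge whose removal increases the number of connected components. *)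

theory Defs
  imports Main "HOL-Library.Extended_Nat"
begin

text \<open>Players are V = {1..n}. Graphs are given by a set of undirected edges,
  each edge being a two-element set {u,v}.\<close>

definition players :: "nat \<Rightarrow> nat set" where
  "players n = {1..n}"

definition celebrity_game :: "nat \<Rightarrow> (nat \<Rightarrow> real) \<Rightarrow> real \<Rightarrow> nat \<Rightarrow> bool" where
  "celebrity_game n w \<alpha> \<beta> \<longleftrightarrow>
     (\<forall>u\<in>players n. w u > 0) \<and> \<alpha> > 0 \<and> 1 \<le> \<beta> \<and> \<beta> \<le> n - 1"

definition strategy_profile :: "nat \<Rightarrow> (nat \<Rightarrow> nat set) \<Rightarrow> bool" where
  "strategy_profile n S \<longleftrightarrow> (\<forall>u\<in>players n. S u \<subseteq> players n - {u})"

definition outcome_edges :: "nat \<Rightarrow> (nat \<Rightarrow> nat set) \<Rightarrow> nat set set" where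
  "outcome_edges n S = {{u, v} | u v. u \<in> players n \<and> v \<in> players n \<and> (u \<in> S v \<or> v \<in> S u)}"

fun walk :: "nat set set \<Rightarrow> nat list \<Rightarrow> bool" where
  "walk E [] = False"
| "walk E [x] = True"
| "walk E (x # y # xs) = ({x, y} \<in> E \<and> walk E (y # xs))"

text \<open>Graph distance on vertex set V (infinite between different components).\<close>
definition graph_dist :: "nat set \<Rightarrow> nat set set \<Rightarrow> nat \<Rightarrow> nat \<Rightarrow> enat" where
  "graph_dist V E u v =
     (INF xs \<in> {xs. walk E xs \<and> set xs \<subseteq> V \<and> hd xs = u \<and> last xs = v}. enat (length xs - 1))"

definition cost :: "nat \<Rightarrow> (nat \<Rightarrow> real) \<Rightarrow> real \<Rightarrow> nat \<Rightarrow> (nat \<Rightarrow> nat set) \<Rightarrow> nat \<Rightarrow> real" where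
  "cost n w \<alpha> \<beta> S u =
     \<alpha> * real (card (S u)) +
     (\<Sum>v\<in>{v\<in>players n. graph_dist (players n) (outcome_edges n S) u v > enat \<beta>}. w v)"

definition nash_equilibrium :: "nat \<Rightarrow> (nat \<Rightarrow> real) \<Rightarrow> real \<Rightarrow> nat \<Rightarrow> (nat \<Rightarrow> nat set) \<Rightarrow> bool" where
  "nash_equilibrium n w \<alpha> \<beta> S \<longleftrightarrow>
     strategy_profile n S \<and>
     (\<forall>u\<in>players n. \<forall>T. T \<subseteq> players n - {u} \<longrightarrow>
        cost n w \<alpha> \<beta> S u \<le> cost n w \<alpha> \<beta> (S(u := T)) u)"

definition graph_connected :: "nat set \<Rightarrow> nat set set \<Rightarrow> bool" where
  "graph_connected V E \<longleftrightarrow> (\<forall>u\<in>V. \<forall>v\<in>V. graph_dist V E u v < \<infinity>)"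

definition star_celebrity_game :: "nat \<Rightarrow> (nat \<Rightarrow> real) \<Rightarrow> real \<Rightarrow> nat \<Rightarrow> bool" where
  "star_celebrity_game n w \<alpha> \<beta> \<longleftrightarrow>
     celebrity_game n w \<alpha> \<beta> \<and>
     (\<exists>S. nash_equilibrium n w \<alpha> \<beta> S \<and> graph_connected (players n) (outcome_edges n S))"

definition components :: "nat set \<Rightarrow> nat set set \<Rightarrow> nat set set" where
  "components V E = {{v\<in>V. graph_dist V E u v < \<infinity>} | u. u \<in> V}"

definition is_bridge :: "nat set \<Rightarrow> nat set set \<Rightarrow> nat set \<Rightarrow> bool" where
  "is_bridge V E e \<longleftrightarrow> e \<in> E \<and> card (components V (E - {e})) > card (components V E)"

end

theory Submission
  imports Defs
begin


definition W :: "nat set \<Rightarrow> nat set set \<Rightarrow> nat \<Rightarrow> nat \<Rightarrow> nat list \<Rightarrow> bool" where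
  "W V E u z xs \<longleftrightarrow> walk E xs \<and> set xs \<subseteq> V \<and> hd xs = u \<and> last xs = z"

lemma walk_nonempty: "walk E xs \<Longrightarrow> xs \<noteq> []" by (cases xs) auto

lemma walk_Cons: "walk E (x # xs) \<longleftrightarrow> (xs = [] \<or> ({x, hd xs} \<in> E \<and> walk E xs))"
  by (cases xs) auto

lemma walk_append: "walk E xs \<Longrightarrow> walk E ys \<Longrightarrow> last xs = hd ys \<Longrightarrow> walk E (xs @ tl ys)"
proof (induction E xs rule: walk.induct)
  case (2 E x) then show ?case by (cases ys) auto
qed auto

lemma walk_suffix: "walk E (xs @ ys) \<Longrightarrow> ys \<noteq> [] \<Longrightarrow> walk E ys"
  by (induction xs) (auto simp: walk_Cons)

lemma walk_prefix: "walk E (xs @ ys) \<Longrightarrow> xs \<noteq> [] \<Longrightarrow> walk E xs"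
proof (induction xs)
  case (Cons a xs) then show ?case by (cases xs) (auto simp: walk_Cons)
qed auto

lemma walk_snoc: "walk E (xs @ [a, b]) \<longleftrightarrow> walk E (xs @ [a]) \<and> {a, b} \<in> E"
proof (induction xs)
  case (Cons c xs) then show ?case by (cases xs) (auto simp: walk_Cons)
qed auto

lemma walk_rev: "walk E xs \<Longrightarrow> walk E (rev xs)"
proof (induction E xs rule: walk.induct)
  case (3 E x y xs)
  have "walk E (rev xs @ [y, x])"
    using 3 by (subst walk_snoc) (auto simp: insert_commute)
  then show ?case by simp
qed auto

lemma walk_mono: "walk E xs \<Longrightarrow> E \<subseteq> F \<Longrightarrow> walk F xs"
  by (induction E xs rule: walk.induct) auto

lemma walk_avoid: "walk E xs \<Longrightarrow> v \<notin> set xs \<Longrightarrow> walk (E - {{v,x}}) xs"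
  by (induction E xs rule: walk.induct) auto

lemma dist_le_iff:
  "graph_dist V E u z \<le> enat k \<longleftrightarrow> (\<exists>xs. W V E u z xs \<and> length xs \<le> Suc k)"
proof
  let ?A = "{xs. walk E xs \<and> set xs \<subseteq> V \<and> hd xs = u \<and> last xs = z}"
  assume h: "graph_dist V E u z \<le> enat k"
  have ne: "?A \<noteq> {}"
  proof
    assume e: "?A = {}"
    have "graph_dist V E u z = top" unfolding graph_dist_def e by simp
    then show False using h by (simp add: top_enat_def)
  qed
  then have "(\<lambda>xs. enat (length xs - 1)) ` ?A \<noteq> {}" by blast
  then obtain a where a: "a \<in> (\<lambda>xs. enat (length xs - 1)) ` ?A" by blast
  have "Inf ((\<lambda>xs. enat (length xs - 1)) ` ?A) = (LEAST x. x \<in> (\<lambda>xs. enat (length xs - 1)) ` ?A)"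
    unfolding Inf_enat_def using a by auto
  moreover have "(LEAST x. x \<in> (\<lambda>xs. enat (length xs - 1)) ` ?A) \<in> (\<lambda>xs. enat (length xs - 1)) ` ?A"
    by (rule LeastI[where P="\<lambda>x. x \<in> (\<lambda>xs. enat (length xs - 1)) ` ?A", OF a])
  ultimately have "Inf ((\<lambda>xs. enat (length xs - 1)) ` ?A) \<in> (\<lambda>xs. enat (length xs - 1)) ` ?A"
    by simp
  then obtain xs where xs: "xs \<in> ?A" "graph_dist V E u z = enat (length xs - 1)"
    unfolding graph_dist_def by auto
  then have "xs \<noteq> []" using walk_nonempty by auto
  then show "\<exists>xs. W V E u z xs \<and> length xs \<le> Suc k"
    using xs h by (auto simp: W_def intro!: exI[of _ xs])
next
  assume "\<exists>xs. W V E u z xs \<and> length xs \<le> Suc k"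
  then obtain xs where "W V E u z xs" "length xs \<le> Suc k" by blast
  then show "graph_dist V E u z \<le> enat k" unfolding graph_dist_def W_def
    by (intro INF_lower2[of xs]) auto
qed

lemma W_dist: "W V E u z xs \<Longrightarrow> graph_dist V E u z \<le> enat (length xs - 1)"
  using dist_le_iff by (metis Suc_pred' W_def le_refl length_greater_0_conv walk_nonempty)

lemma dist_fin_iff: "graph_dist V E u z < \<infinity> \<longleftrightarrow> (\<exists>xs. W V E u z xs)"
proof
  assume "graph_dist V E u z < \<infinity>"
  then obtain k where "graph_dist V E u z = enat k" by (cases "graph_dist V E u z") auto
  then show "\<exists>xs. W V E u z xs" using dist_le_iff[of V E u z k] by auto
next
  assume "\<exists>xs. W V E u z xs"
  then show "graph_dist V E u z < \<infinity>" using W_dist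
    by (metis enat_ord_simps(4) infinity_ileE leD leI)
qed

lemma dist_exact:
  assumes "graph_dist V E u z = enat k"
  shows "\<exists>xs. W V E u z xs \<and> length xs = Suc k"
proof -
  obtain xs where xs: "W V E u z xs" "length xs \<le> Suc k" using assms dist_le_iff[of V E u z k] by auto
  have "length xs = Suc k"
  proof (rule ccontr)
    assume "length xs \<noteq> Suc k"
    moreover have "xs \<noteq> []" using xs walk_nonempty unfolding W_def by auto
    ultimately have "length xs - 1 < k" using xs(2) by (cases xs) auto
    moreover have "graph_dist V E u z \<le> enat (length xs - 1)" using W_dist[OF xs(1)] .
    ultimately show False using assms by simp
  qed
  then show ?thesis using xs by blast
qed

lemma W_append: "W V E a b xs \<Longrightarrow> W V E b c ys \<Longrightarrow> W V E a c (xs @ tl ys) \<and> length (xs @ tl ys) = length xs + length ys - 1"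
proof -
  assume x: "W V E a b xs" and y: "W V E b c ys"
  have nx: "xs \<noteq> []" and ny: "ys \<noteq> []" using x y walk_nonempty unfolding W_def by auto
  have w: "walk E (xs @ tl ys)" using x y walk_append unfolding W_def by auto
  have s: "set (xs @ tl ys) \<subseteq> V" using x y ny unfolding W_def
    by (auto dest: list.set_sel(2))
  have h: "hd (xs @ tl ys) = a" using x nx unfolding W_def by simp
  have l: "last (xs @ tl ys) = c"
  proof (cases "tl ys = []")
    case True
    then have "ys = [hd ys]" using ny by (metis list.collapse)
    then show ?thesis using x y True unfolding W_def by (metis append_Nil2 last_ConsL)
  next
    case False
    then show ?thesis using y ny unfolding W_def by (metis last_appendR last_tl)
  qed
  have "length ys \<ge> 1" using ny by (cases ys) auto
  then show ?thesis using w s h l unfolding W_def by simp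
qed

lemma dist_tri: "graph_dist V E a c \<le> graph_dist V E a b + graph_dist V E b c"
proof (cases "graph_dist V E a b" rule: enat.exhaust)
  case (enat i)
  show ?thesis
  proof (cases "graph_dist V E b c" rule: enat.exhaust)
    case (enat j)
    obtain xs where xs: "W V E a b xs" "length xs = Suc i" using dist_exact \<open>graph_dist V E a b = enat i\<close> by blast
    obtain ys where ys: "W V E b c ys" "length ys = Suc j" using dist_exact enat by blast
    from W_append[OF xs(1) ys(1)] have "graph_dist V E a c \<le> enat (i + j)"
      using xs ys W_dist by fastforce
    then show ?thesis using enat \<open>graph_dist V E a b = enat i\<close> by simp
  qed simp
qed simp

lemma W_rev: "W V E a b xs \<Longrightarrow> W V E b a (rev xs)"
  unfolding W_def using walk_rev walk_nonempty by (auto simp: hd_rev last_rev)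

lemma dist_sym: "graph_dist V E a b = graph_dist V E b a"
proof -
  have "graph_dist V E a b \<le> graph_dist V E b a" for a b
  proof (cases "graph_dist V E b a")
    case (enat k)
    then obtain xs where "W V E b a xs" "length xs = Suc k" using dist_exact by blast
    then show ?thesis using W_dist[OF W_rev] enat by fastforce
  qed simp
  then show ?thesis by (metis order_antisym)
qed

lemma dist_mono: "E \<subseteq> F \<Longrightarrow> graph_dist V F u z \<le> graph_dist V E u z"
  unfolding graph_dist_def using walk_mono by (intro INF_superset_mono) auto

lemma dist_refl: assumes "u \<in> V" shows "graph_dist V E u u = 0"
proof -
  have "graph_dist V E u u \<le> 0" using W_dist[of V E u u "[u]"] assms by (simp add: W_def zero_enat_def)
  then show ?thesis by simp
qed



lemma first_edge_w:
  assumes d: "graph_dist V E v z = enat k"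
    and nd: "\<not> graph_dist V (E - {{v,x}}) v z \<le> enat k"
    and w: "W V E v z w" "length w = Suc k"
  shows "\<exists>b. w = v # x # b \<and> length (x#b) = k \<and> v \<notin> set (x#b) \<and> walk (E - {{v,x}}) (x#b)"
proof -
  from w obtain t where t: "w = v # t" unfolding W_def
    by (metis hd_Cons_tl walk_nonempty)
  have vt: "v \<notin> set t"
  proof
    assume "v \<in> set t"
    then obtain p q where pq: "t = p @ v # q" by (meson split_list)
    have "walk E ((v # p) @ (v # q))" using w t pq unfolding W_def by simp
    then have "walk E (v # q)" using walk_suffix by blast
    moreover have "last (v # q) = z" using w t pq unfolding W_def by simp
    moreover have "set (v # q) \<subseteq> V" using w t pq unfolding W_def by auto
    ultimately have "W V E v z (v # q)" unfolding W_def by simp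
    then have "graph_dist V E v z \<le> enat (length q)" using W_dist by fastforce
    moreover have "length q < k" using w t pq by simp
    ultimately show False using d by simp
  qed
  have "t \<noteq> []"
  proof
    assume "t = []"
    then have "z = v" "v \<in> V" using w t unfolding W_def by auto
    then show False using nd dist_refl[of v V] by (simp add: zero_enat_def)
  qed
  then obtain a b where ab: "t = a # b" by (cases t) auto
  have wt: "walk E t" using w t \<open>t \<noteq> []\<close> unfolding W_def by (simp add: walk_Cons)
  have wt': "walk (E - {{v,x}}) t" using walk_avoid[OF wt vt] .
  have "a = x"
  proof (rule ccontr)
    assume "a \<noteq> x"
    have "{v,a} \<in> E" using w t ab unfolding W_def by simp
    moreover have "{v,a} \<noteq> {v,x}" using \<open>a \<noteq> x\<close> by (auto simp: doubleton_eq_iff)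
    ultimately have "walk (E - {{v,x}}) w" using wt' t ab by simp
    then have "W V (E - {{v,x}}) v z w" using w unfolding W_def by simp
    then have "graph_dist V (E - {{v,x}}) v z \<le> enat k" using W_dist w by fastforce
    then show False using nd by simp
  qed
  then show ?thesis using w t ab vt wt' by auto
qed

lemma first_edge:
  assumes d: "graph_dist V E v z = enat k"
    and nd: "\<not> graph_dist V (E - {{v,x}}) v z \<le> enat k"
  shows "\<exists>b. W V E v z (v # x # b) \<and> length (x#b) = k \<and> v \<notin> set (x#b) \<and> walk (E - {{v,x}}) (x#b)"
proof -
  obtain w where w: "W V E v z w" "length w = Suc k" using dist_exact[OF d] by blast
  then show ?thesis using first_edge_w[OF d nd w] by auto
qed



lemma enat_le_plus: "(a::enat) \<le> b + enat m \<Longrightarrow> b \<le> enat j \<Longrightarrow> a \<le> enat (j + m)"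
  by (cases a; cases b) auto

lemma enat_le_plus2: "(a::enat) \<le> b + c \<Longrightarrow> b \<le> enat i \<Longrightarrow> c \<le> enat j \<Longrightarrow> a \<le> enat (i + j)"
  by (cases a; cases b; cases c) auto

lemma W_take: assumes "W V E u z xs" "i < length xs" shows "W V E u (xs!i) (take (Suc i) xs)"
proof -
  have w: "walk E xs" "set xs \<subseteq> V" "hd xs = u" using assms unfolding W_def by auto
  have e: "xs = take (Suc i) xs @ drop (Suc i) xs" by simp
  have ne: "take (Suc i) xs \<noteq> []" using assms(2) by (cases xs) auto
  have 1: "walk E (take (Suc i) xs)" using walk_prefix[of E "take (Suc i) xs" "drop (Suc i) xs"] w(1) e ne by simp
  have 2: "set (take (Suc i) xs) \<subseteq> V" using w(2) set_take_subset by fast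
  have 3: "hd (take (Suc i) xs) = u" using w(3) ne by (simp add: hd_take)
  have 4: "last (take (Suc i) xs) = xs ! i" using assms(2) by (simp add: take_Suc_conv_app_nth)
  show ?thesis using 1 2 3 4 unfolding W_def by simp
qed

lemma W_drop: assumes "W V E u z xs" "i < length xs" shows "W V E (xs!i) z (drop i xs)"
proof -
  have w: "walk E xs" "set xs \<subseteq> V" "last xs = z" using assms unfolding W_def by auto
  have e: "xs = take i xs @ drop i xs" by simp
  have ne: "drop i xs \<noteq> []" using assms(2) by simp
  have 1: "walk E (drop i xs)" using walk_suffix[of E "take i xs" "drop i xs"] w(1) e ne by simp
  have 2: "set (drop i xs) \<subseteq> V" using w(2) set_drop_subset by fast
  have 3: "hd (drop i xs) = xs ! i" using assms(2) by (simp add: hd_drop_conv_nth)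
  have 4: "last (drop i xs) = z" using assms(2) w(3) by simp
  show ?thesis using 1 2 3 4 unfolding W_def by simp
qed

lemma key:
  assumes fin: "finite V" and vx: "{v,x} \<in> E" "v \<in> V" "x \<in> V"
    and y1: "graph_dist V E v y \<le> enat \<beta>"
    and y2: "\<not> graph_dist V (E - {{v,x}}) v y \<le> enat \<beta>"
    and r: "graph_dist V (E - {{v,x}}) v x < \<infinity>"
  shows "\<beta> \<le> 3 * card {z\<in>V. graph_dist V E v z < graph_dist V (E - {{v,x}}) v z}"
proof -
  define E' where "E' = E - {{v,x}}"
  define D where "D = {z\<in>V. graph_dist V E v z < graph_dist V E' v z}"
  have finD: "finite D" using fin unfolding D_def by simp
  obtain k where k: "graph_dist V E v y = enat k" "k \<le> \<beta>" using y1
    by (cases "graph_dist V E v y") auto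
  have nk: "\<not> graph_dist V E' v y \<le> enat k" using y2 k unfolding E'_def
    by (meson enat_ord_simps(1) order_trans)
  obtain b where b: "W V E v y (v # x # b)" "length (x#b) = k" "v \<notin> set (x#b)" "walk E' (x#b)"
    using first_edge[OF k(1) nk[unfolded E'_def]] unfolding E'_def by blast
  define p where "p = x # b"
  have k1: "1 \<le> k" using b by auto
  have Wp: "W V E' x y p" using b unfolding p_def W_def by auto
  have EE: "E' \<subseteq> E" unfolding E'_def by auto
  have A: "k \<le> card D"
  proof -
    have q: "p ! j \<in> D \<and> graph_dist V E v (p ! j) = enat (Suc j)" if j: "j < k" for j
    proof -
      have W1: "W V E v (p!j) (take (Suc (Suc j)) (v # p))"
        using W_take[of V E v y "v # p" "Suc j"] b j unfolding p_def by simp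
      have u1: "graph_dist V E v (p!j) \<le> enat (Suc j)"
        using W_dist[OF W1] j b(2) unfolding p_def by simp
      have W2: "W V E' (p!j) y (drop j p)" using W_drop[OF Wp] j b(2) unfolding p_def by simp
      have u2: "graph_dist V E' (p!j) y \<le> enat (k - 1 - j)"
      proof -
        have "length (drop j p) - 1 = k - 1 - j" using b(2) unfolding p_def by simp
        then show ?thesis using W_dist[OF W2] by simp
      qed
      have u3: "graph_dist V E (p!j) y \<le> enat (k - 1 - j)"
        using dist_mono[OF EE] u2 order_trans by blast
      have "\<not> graph_dist V E v (p!j) \<le> enat j"
      proof
        assume "graph_dist V E v (p!j) \<le> enat j"
        then have "graph_dist V E v y \<le> enat (j + (k - 1 - j))"
          using enat_le_plus2[OF dist_tri[of V E v y "p!j"] _ u3] by blast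
        then show False using k j by simp
      qed
      then have e1: "graph_dist V E v (p!j) = enat (Suc j)" using u1
        by (cases "graph_dist V E v (p!j)") auto
      have "\<not> graph_dist V E' v (p!j) \<le> enat (Suc j)"
      proof
        assume "graph_dist V E' v (p!j) \<le> enat (Suc j)"
        then have "graph_dist V E' v y \<le> enat (Suc j + (k - 1 - j))"
          using enat_le_plus2[OF dist_tri[of V E' v y "p!j"] _ u2] by blast
        then show False using nk j by simp
      qed
      then have "graph_dist V E v (p!j) < graph_dist V E' v (p!j)" using e1 by simp
      moreover have "p!j \<in> V" using Wp j b(2) unfolding W_def p_def
        by (metis nth_mem subsetD)
      ultimately show ?thesis using e1 unfolding D_def by simp
    qed
    have "inj_on (\<lambda>j. p ! j) {..<k}"
      by (rule inj_onI) (metis lessThan_iff q Suc_inject enat.inject)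
    then have "card ((\<lambda>j. p ! j) ` {..<k}) = k" by (simp add: card_image)
    moreover have "(\<lambda>j. p ! j) ` {..<k} \<subseteq> D" using q by auto
    ultimately show ?thesis using card_mono[OF finD] by metis
  qed
  obtain L where L: "graph_dist V E' v x = enat L" using r unfolding E'_def
    by (cases "graph_dist V (E - {{v,x}}) v x") auto
  obtain R where R: "W V E' v x R" "length R = Suc L" using dist_exact[OF L] by blast
  have Lk: "\<beta> + 2 \<le> L + k"
  proof -
    have "graph_dist V E' x y \<le> enat (k - 1)" using W_dist[OF Wp] b(2) unfolding p_def by force
    then have "graph_dist V E' v y \<le> enat (L + (k - 1))"
      using enat_le_plus2[OF dist_tri[of V E' v y x] _ \<open>graph_dist V E' x y \<le> enat (k - 1)\<close>] L by simp
    then have "\<not> L + (k - 1) \<le> \<beta>" using y2 unfolding E'_def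
      by (meson enat_ord_simps(1) order_trans)
    then show ?thesis using k1 by linarith
  qed
  have dvx: "graph_dist V E v x \<le> enat 1"
    using W_dist[of V E v x "[v,x]"] vx by (simp add: W_def)
  have B: "L div 2 \<le> card D"
  proof -
    have q: "R ! (L - t) \<in> D \<and> graph_dist V E' v (R ! (L - t)) = enat (L - t)" if t: "t < L div 2" for t
    proof -
      have W1: "W V E' v (R!(L-t)) (take (Suc (L-t)) R)" using W_take[OF R(1)] R(2) by simp
      have u1: "graph_dist V E' v (R!(L-t)) \<le> enat (L - t)" using W_dist[OF W1] R(2) t by simp
      have W2: "W V E' (R!(L-t)) x (drop (L-t) R)" using W_drop[OF R(1)] R(2) by simp
      have u2: "graph_dist V E' (R!(L-t)) x \<le> enat t" using W_dist[OF W2] R(2) t by simp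
      have "\<not> graph_dist V E' v (R!(L-t)) \<le> enat (L - t - 1)"
      proof
        assume "graph_dist V E' v (R!(L-t)) \<le> enat (L - t - 1)"
        then have "graph_dist V E' v x \<le> enat (L - t - 1 + t)"
          using enat_le_plus2[OF dist_tri[of V E' v x "R!(L-t)"] _ u2] by blast
        then show False using L t by simp
      qed
      then have e1: "graph_dist V E' v (R!(L-t)) = enat (L - t)" using u1
        by (cases "graph_dist V E' v (R!(L-t))") auto
      have "graph_dist V E x (R!(L-t)) \<le> enat t"
        using dist_mono[OF EE, of V "R!(L-t)" x] u2 dist_sym[of V E x "R!(L-t)"] by simp
      then have "graph_dist V E v (R!(L-t)) \<le> enat (1 + t)"
        using enat_le_plus2[OF dist_tri[of V E v "R!(L-t)" x] dvx] by blast
      also have "\<dots> < enat (L - t)" using t by simp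
      finally have "graph_dist V E v (R!(L-t)) < graph_dist V E' v (R!(L-t))" using e1 by simp
      moreover have "R!(L-t) \<in> V" using R unfolding W_def by (metis diff_le_self le_imp_less_Suc nth_mem subsetD)
      ultimately show ?thesis using e1 unfolding D_def by simp
    qed
    have "inj_on (\<lambda>t. R ! (L - t)) {..<L div 2}"
    proof (rule inj_onI)
      fix s t assume "s \<in> {..<L div 2}" "t \<in> {..<L div 2}" "R ! (L - s) = R ! (L - t)"
      then have "enat (L - s) = enat (L - t)" using q by (metis lessThan_iff)
      then show "s = t" using \<open>s \<in> _\<close> \<open>t \<in> _\<close> by auto
    qed
    then have "card ((\<lambda>t. R ! (L - t)) ` {..<L div 2}) = L div 2" by (simp add: card_image)
    moreover have "(\<lambda>t. R ! (L - t)) ` {..<L div 2} \<subseteq> D" using q by auto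
    ultimately show ?thesis using card_mono[OF finD] by metis
  qed
  have "\<beta> \<le> 3 * card D" using A B Lk by linarith
  then show ?thesis unfolding D_def E'_def .
qed



lemma reach_trans: "graph_dist V E a b < \<infinity> \<Longrightarrow> graph_dist V E b c < \<infinity> \<Longrightarrow> graph_dist V E a c < \<infinity>"
  using dist_tri[of V E a c b]
  by (metis enat_ord_simps(4) order.strict_trans1 plus_eq_infty_iff_enat)

lemma components_img: "components V E = (\<lambda>u. {z\<in>V. graph_dist V E u z < \<infinity>}) ` V"
  unfolding components_def by auto

lemma bridge:
  assumes fin: "finite V" and vx: "{v,x} \<in> E" "v \<in> V" "x \<in> V"
    and nr: "\<not> graph_dist V (E - {{v,x}}) v x < \<infinity>"
  shows "is_bridge V E {v,x}"
proof -
  define E' where "E' = E - {{v,x}}"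
  define C where "C F u = {z\<in>V. graph_dist V F u z < \<infinity>}" for F u
  define \<phi> where "\<phi> A = {z\<in>V. \<exists>c\<in>A. graph_dist V E c z < \<infinity>}" for A
  have EE: "E' \<subseteq> E" unfolding E'_def by auto
  have refl: "graph_dist V F u u < \<infinity>" if "u \<in> V" for F u using dist_refl[OF that] by simp
  have phi: "\<phi> (C E' u) = C E u" if u: "u \<in> V" for u
  proof
    show "\<phi> (C E' u) \<subseteq> C E u"
    proof
      fix z assume "z \<in> \<phi> (C E' u)"
      then obtain c where c: "z \<in> V" "graph_dist V E' u c < \<infinity>" "graph_dist V E c z < \<infinity>"
        unfolding \<phi>_def C_def by auto
      have "graph_dist V E u c < \<infinity>" using c(2) dist_mono[OF EE, of V u c] by (meson le_less_trans)
      then show "z \<in> C E u" using c reach_trans unfolding C_def by blast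
    qed
    show "C E u \<subseteq> \<phi> (C E' u)" using u refl unfolding \<phi>_def C_def by auto
  qed
  have cE: "components V E = \<phi> ` components V E'"
    unfolding components_img C_def[symmetric] image_image using phi by auto
  have finc: "finite (components V E')" unfolding components_img using fin by simp
  have x1: "x \<in> C E' x" using refl[OF vx(3)] vx(3) unfolding C_def by simp
  have x2: "x \<notin> C E' v" using nr unfolding C_def E'_def by simp
  have "C E' v \<noteq> C E' x" using x1 x2 by blast
  moreover have "C E v = C E x"
  proof -
    have dvx: "graph_dist V E v x < \<infinity>"
    proof -
      have "graph_dist V E v x \<le> enat 1" using W_dist[of V E v x "[v,x]"] vx by (simp add: W_def)
      then show ?thesis by (cases "graph_dist V E v x") auto
    qed
    then have dxv: "graph_dist V E x v < \<infinity>" using dist_sym by metis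
    show ?thesis unfolding C_def using reach_trans dvx dxv by blast
  qed
  ultimately have "\<not> inj_on \<phi> (components V E')"
    using phi vx unfolding inj_on_def components_img C_def by (metis (no_types, lifting) image_eqI)
  then have "card (components V E) < card (components V E')"
    unfolding cE using inj_on_iff_eq_card[OF finc, of \<phi>] card_image_le[OF finc, of \<phi>] by linarith
  then show ?thesis unfolding is_bridge_def E'_def using vx by simp
qed

lemma disjoint_D:
  assumes "graph_dist V E v z < graph_dist V (E - {{v,x}}) v z"
    and "graph_dist V E v z < graph_dist V (E - {{v,x'}}) v z"
  shows "x = x'"
proof -
  obtain k where k: "graph_dist V E v z = enat k" using assms(1)
    by (cases "graph_dist V E v z") auto
  have "\<not> graph_dist V (E - {{v,x'}}) v z \<le> enat k" using assms(2) k by auto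
  then obtain b' where w: "W V E v z (v # x' # b')" "length (x'#b') = k" using first_edge[OF k] by blast
  have "\<not> graph_dist V (E - {{v,x}}) v z \<le> enat k" using assms(1) k by auto
  from first_edge_w[OF k this w(1)] w(2) show ?thesis by auto
qed



lemma edges_same:
  assumes "x \<in> S v" "v \<in> S x" "x \<noteq> v"
  shows "outcome_edges n (S(v := S v - {x})) = outcome_edges n S"
proof -
  have eq: "(a \<in> (S(v := S v - {x})) b \<or> b \<in> (S(v := S v - {x})) a) \<longleftrightarrow> (a \<in> S b \<or> b \<in> S a)"
    for a b using assms by (cases "b = v"; cases "a = v") auto
  show ?thesis unfolding outcome_edges_def
    by (rule Collect_cong) (use eq in blast)
qed

lemma edges_remove:
  assumes "x \<in> S v" "v \<notin> S x" "x \<noteq> v"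
  shows "outcome_edges n (S(v := S v - {x})) = outcome_edges n S - {{v,x}}"
proof -
  let ?S' = "S(v := S v - {x})"
  have eq: "(a \<in> ?S' b \<or> b \<in> ?S' a) \<longleftrightarrow> (a \<in> S b \<or> b \<in> S a) \<and> {a,b} \<noteq> {v,x}"
    for a b
  proof (cases "b = v"; cases "a = v")
    assume "b = v" "a = v" then show ?thesis using assms by auto
  next
    assume "b = v" "a \<noteq> v" then show ?thesis using assms by (auto simp: doubleton_eq_iff)
  next
    assume "b \<noteq> v" "a = v" then show ?thesis using assms by (auto simp: doubleton_eq_iff)
  next
    assume "b \<noteq> v" "a \<noteq> v" then show ?thesis using assms by (auto simp: doubleton_eq_iff)
  qed
  show ?thesis unfolding outcome_edges_def
  proof (intro equalityI subsetI)
    fix e assume "e \<in> {{u, w} |u w. u \<in> players n \<and> w \<in> players n \<and> (u \<in> ?S' w \<or> w \<in> ?S' u)}"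
    then obtain a b where "e = {a,b}" "a \<in> players n" "b \<in> players n" "a \<in> ?S' b \<or> b \<in> ?S' a" by blast
    then show "e \<in> {{u, w} |u w. u \<in> players n \<and> w \<in> players n \<and> (u \<in> S w \<or> w \<in> S u)} - {{v, x}}"
      using eq[of a b] by blast
  next
    fix e assume "e \<in> {{u, w} |u w. u \<in> players n \<and> w \<in> players n \<and> (u \<in> S w \<or> w \<in> S u)} - {{v, x}}"
    then obtain a b where "e = {a,b}" "a \<in> players n" "b \<in> players n" "a \<in> S b \<or> b \<in> S a" "e \<noteq> {v,x}" by blast
    then show "e \<in> {{u, w} |u w. u \<in> players n \<and> w \<in> players n \<and> (u \<in> ?S' w \<or> w \<in> ?S' u)}"
      using eq[of a b] by blast
  qed
qed



lemma cost_drop: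
  assumes fin: "finite (S v)" and x: "x \<in> S v"
    and same: "\<And>y. y \<in> players n \<Longrightarrow>
       (graph_dist (players n) (outcome_edges n (S(v := S v - {x}))) v y > enat \<beta>) =
       (graph_dist (players n) (outcome_edges n S) v y > enat \<beta>)"
  shows "cost n w \<alpha> \<beta> (S(v := S v - {x})) v = cost n w \<alpha> \<beta> S v - \<alpha>"
proof -
  have c: "card (S v - {x}) = card (S v) - 1" using fin x by simp
  have c1: "card (S v) \<ge> 1" using fin x by (metis card_0_eq empty_iff less_one not_le)
  have r: "real (card (S v) - 1) = real (card (S v)) - 1" using c1 by simp
  have "{y \<in> players n. enat \<beta> < graph_dist (players n) (outcome_edges n (S(v := S v - {x}))) v y}
     = {y \<in> players n. enat \<beta> < graph_dist (players n) (outcome_edges n S) v y}"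
    using same by blast
  then show ?thesis unfolding cost_def using c r by (simp add: algebra_simps)
qed

lemma deviation:
  assumes ne: "nash_equilibrium n w \<alpha> \<beta> S" and a: "\<alpha> > 0"
    and v: "v \<in> players n" and x: "x \<in> S v"
  shows "v \<notin> S x \<and> (\<exists>y\<in>players n. graph_dist (players n) (outcome_edges n S) v y \<le> enat \<beta> \<and>
           \<not> graph_dist (players n) (outcome_edges n S - {{v,x}}) v y \<le> enat \<beta>)"
proof -
  have sp: "strategy_profile n S" using ne unfolding nash_equilibrium_def by simp
  have Sv: "S v \<subseteq> players n - {v}" using sp v unfolding strategy_profile_def by blast
  have fin: "finite (S v)" using Sv by (rule finite_subset) (simp add: players_def)
  have xV: "x \<in> players n" "x \<noteq> v" using Sv x by auto
  have le: "cost n w \<alpha> \<beta> S v \<le> cost n w \<alpha> \<beta> (S(v := S v - {x})) v"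
  proof -
    have "\<forall>u\<in>players n. \<forall>T. T \<subseteq> players n - {u} \<longrightarrow> cost n w \<alpha> \<beta> S u \<le> cost n w \<alpha> \<beta> (S(u := T)) u"
      using ne unfolding nash_equilibrium_def by simp
    moreover have "S v - {x} \<subseteq> players n - {v}" using Sv by blast
    ultimately show ?thesis using v by blast
  qed
  have vx: "v \<notin> S x"
  proof
    assume "v \<in> S x"
    then have "outcome_edges n (S(v := S v - {x})) = outcome_edges n S" using edges_same[of x S v n] x xV(2) by blast
    then have "cost n w \<alpha> \<beta> (S(v := S v - {x})) v = cost n w \<alpha> \<beta> S v - \<alpha>"
      using cost_drop[of S v x n \<beta> w \<alpha>, OF fin x] by simp
    then show False using le a by simp
  qed
  have eq: "outcome_edges n (S(v := S v - {x})) = outcome_edges n S - {{v,x}}"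
    using edges_remove[OF x vx xV(2)] .
  show ?thesis
  proof (rule conjI[OF vx], rule ccontr)
    assume h: "\<not> (\<exists>y\<in>players n. graph_dist (players n) (outcome_edges n S) v y \<le> enat \<beta> \<and>
           \<not> graph_dist (players n) (outcome_edges n S - {{v,x}}) v y \<le> enat \<beta>)"
    have "(graph_dist (players n) (outcome_edges n (S(v := S v - {x}))) v y > enat \<beta>) =
       (graph_dist (players n) (outcome_edges n S) v y > enat \<beta>)" if "y \<in> players n" for y
    proof -
      have "graph_dist (players n) (outcome_edges n S) v y \<le> graph_dist (players n) (outcome_edges n S - {{v,x}}) v y"
        by (rule dist_mono) auto
      moreover have "graph_dist (players n) (outcome_edges n S) v y \<le> enat \<beta> \<longrightarrow>
           graph_dist (players n) (outcome_edges n S - {{v,x}}) v y \<le> enat \<beta>" using h that by blast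
      ultimately show ?thesis unfolding eq using order_trans not_le by metis
    qed
    then have "cost n w \<alpha> \<beta> (S(v := S v - {x})) v = cost n w \<alpha> \<beta> S v - \<alpha>"
      using cost_drop[of S v x n \<beta> w \<alpha>, OF fin x] by blast
    then show False using le a by simp
  qed
qed

theorem lemma2:
  fixes n :: nat and w :: "nat \<Rightarrow> real" and \<alpha> :: real and \<beta> :: nat
    and S :: "nat \<Rightarrow> nat set" and v :: nat
  assumes "star_celebrity_game n w \<alpha> \<beta>"
    and "\<beta> > 1"
    and "nash_equilibrium n w \<alpha> \<beta> S"
    and "v \<in> players n"
    and "real (card (S v)) > 6 * real n / real \<beta>"
  shows "\<exists>X \<subseteq> S v. real (card X) \<ge> 3 * real n / real \<beta> \<and>
           (\<forall>x\<in>X. is_bridge (players n) (outcome_edges n S) {v, x})"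
proof -
  define V where "V = players n"
  define E where "E = outcome_edges n S"
  have a: "\<alpha> > 0" using assms(1) unfolding star_celebrity_game_def celebrity_game_def by simp
  have finV: "finite V" and cardV: "card V = n" unfolding V_def players_def by auto
  have sp: "strategy_profile n S" using assms(3) unfolding nash_equilibrium_def by simp
  have Sv: "S v \<subseteq> V - {v}" using sp assms(4) unfolding strategy_profile_def V_def by blast
  have finS: "finite (S v)" using Sv finV finite_subset by blast
  have vV: "v \<in> V" using assms(4) unfolding V_def .
  have edge: "{v,x} \<in> E" if "x \<in> S v" for x
  proof -
    have "x \<in> players n" "v \<in> players n" using that Sv vV unfolding V_def by auto
    then have "\<exists>a b. {v,x} = {a,b} \<and> a \<in> players n \<and> b \<in> players n \<and> (a \<in> S b \<or> b \<in> S a)"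
      using that by blast
    then show ?thesis unfolding E_def outcome_edges_def by simp
  qed
  define D where "D x = {z\<in>V. graph_dist V E v z < graph_dist V (E - {{v,x}}) v z}" for x
  define X' where "X' = {x \<in> S v. graph_dist V (E - {{v,x}}) v x < \<infinity>}"
  define X where "X = S v - X'"
  have finX': "finite X'" using finS unfolding X'_def by simp
  have bD: "\<beta> \<le> 3 * card (D x)" if "x \<in> X'" for x
  proof -
    have x: "x \<in> S v" "graph_dist V (E - {{v,x}}) v x < \<infinity>" using that unfolding X'_def by auto
    obtain y where y: "graph_dist V E v y \<le> enat \<beta>" "\<not> graph_dist V (E - {{v,x}}) v y \<le> enat \<beta>"
      using deviation[OF assms(3) a assms(4) x(1)] unfolding V_def E_def by blast
    show ?thesis unfolding D_def
      by (rule key[OF finV edge[OF x(1)] vV _ y x(2)]) (use x Sv in auto)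
  qed
  have un: "card (\<Union>x\<in>X'. D x) = (\<Sum>x\<in>X'. card (D x))"
  proof (rule card_UN_disjoint[OF finX'])
    show "\<forall>i\<in>X'. finite (D i)" using finV unfolding D_def by simp
    show "\<forall>i\<in>X'. \<forall>j\<in>X'. i \<noteq> j \<longrightarrow> D i \<inter> D j = {}"
    proof (intro ballI impI)
      fix i j :: nat assume "i \<in> X'" "j \<in> X'" "i \<noteq> j"
      show "D i \<inter> D j = {}"
      proof (rule ccontr)
        assume "D i \<inter> D j \<noteq> {}"
        then obtain z where "z \<in> D i" "z \<in> D j" by blast
        then have "graph_dist V E v z < graph_dist V (E - {{v,i}}) v z"
          "graph_dist V E v z < graph_dist V (E - {{v,j}}) v z" unfolding D_def by auto
        then have "i = j" by (rule disjoint_D)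
        then show False using \<open>i \<noteq> j\<close> by simp
      qed
    qed
  qed
  have "(\<Union>x\<in>X'. D x) \<subseteq> V" unfolding D_def by auto
  then have "card (\<Union>x\<in>X'. D x) \<le> n" using card_mono[OF finV] cardV by metis
  moreover have "\<beta> * card X' \<le> 3 * (\<Sum>x\<in>X'. card (D x))"
  proof -
    have "\<beta> * card X' = (\<Sum>x\<in>X'. \<beta>)" by simp
    also have "\<dots> \<le> (\<Sum>x\<in>X'. 3 * card (D x))" by (rule sum_mono) (rule bD)
    finally show ?thesis by (simp add: sum_distrib_left)
  qed
  ultimately have bX': "\<beta> * card X' \<le> 3 * n" using un by linarith
  have cX: "card X = card (S v) - card X'" unfolding X_def
    by (rule card_Diff_subset[OF finX']) (auto simp: X'_def)
  have cX'le: "card X' \<le> card (S v)" using card_mono[OF finS] unfolding X'_def by auto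
  have b0: "real \<beta> > 0" using assms(2) by simp
  have h1: "real (card (S v)) * real \<beta> > 6 * real n" using assms(5) b0 by (simp add: field_simps)
  have h2: "real (card X') * real \<beta> \<le> 3 * real n"
  proof -
    have "real (\<beta> * card X') \<le> real (3 * n)" using bX' by (rule of_nat_mono)
    then show ?thesis by (simp add: mult.commute)
  qed
  have h3: "real (card X) * real \<beta> = real (card (S v)) * real \<beta> - real (card X') * real \<beta>"
    using cX cX'le by (simp add: of_nat_diff left_diff_distrib)
  have "3 * real n \<le> real (card X) * real \<beta>" using h1 h2 h3 by linarith
  then have c: "real (card X) \<ge> 3 * real n / real \<beta>" using b0 by (simp add: field_simps)
  have br: "is_bridge V E {v, x}" if "x \<in> X" for x
  proof -
    have x: "x \<in> S v" "\<not> graph_dist V (E - {{v,x}}) v x < \<infinity>" using that unfolding X_def X'_def by auto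
    show ?thesis by (rule bridge[OF finV edge[OF x(1)] vV _ x(2)]) (use x Sv in auto)
  qed
  show ?thesis
    by (rule exI[of _ X]) (use c br in \<open>auto simp: X_def V_def E_def\<close>)
qed


end
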